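(* Let $\lambda\in\mathbb{C}$ be an algebraic number with $|\lambda|=1$ that is not a root of unity, and define $u_n=\frac n2\lambda^n+\frac n2\overline{\lambda}^n+(1-n)$. Then for every $p\in\mathbb{N}$ there exists $n\in\mathbb{N}$ such that $u_n,u_{n+1},\dots,u_{n+p-1}$ are all $\le 0$. Consequently (together with the fact that $u_n>0$ infinitely often) the sign description of $\langle u_n\rangle$ is not almost periodic.
   Context: $\overline{\lambda}$ is the complex conjugate. The sign description of a real sequence is $\sigma_n=\mathrm{sgn}(u_n)\in\{-,0,+\}$. An infinite word $\alpha$ is almost periodic if for every finite word $w$ there is $p$ such that either $w$ does not occur in $\alpha$ after position $p$, or $w$ occurs in every factor $\alpha_n\cdots\alpha_{n+p}$. *)

theory Defs
  imports "HOL-Analysis.Analysis" "HOL-Computational_Algebra.Polynomial"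
begin

definition occurs_at :: "(nat \<Rightarrow> 'a) \<Rightarrow> 'a list \<Rightarrow> nat \<Rightarrow> bool" where
  "occurs_at alpha w i \<longleftrightarrow> (\<forall>j<length w. alpha (i + j) = w ! j)"

definition almost_periodic :: "(nat \<Rightarrow> 'a) \<Rightarrow> bool" where
  "almost_periodic alpha \<longleftrightarrow>
     (\<forall>w :: 'a list. \<exists>p :: nat.
        (\<forall>i\<ge>p. \<not> occurs_at alpha w i) \<or>
        (\<forall>n. \<exists>i. n \<le> i \<and> i + length w \<le> n + p + 1 \<and> occurs_at alpha w i))"

definition sign_description :: "(nat \<Rightarrow> real) \<Rightarrow> nat \<Rightarrow> real" where
  "sign_description u n = sgn (u n)"

end

theory Submission imports Defs begin

lemma normsq_minus1: fixes z :: complex assumes "cmod z = 1"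
  shows "(cmod (z - 1))^2 = 2 - 2 * Re z"
proof -
  have "(Re z)^2 + (Im z)^2 = 1" using assms by (simp add: cmod_def)
  moreover have "Re z \<le> 1" using abs_Re_le_cmod[of z] assms by simp
  ultimately show ?thesis by (simp add: cmod_def power2_eq_square algebra_simps)
qed

lemma u_formula:
  fixes lam :: complex and u :: "nat \<Rightarrow> real"
  assumes "cmod lam = 1"
    and "\<And>n. complex_of_real (u n) =
           of_nat n / 2 * lam ^ n + of_nat n / 2 * cnj lam ^ n + (1 - of_nat n)"
  shows "u n = 1 - real n * (cmod (lam^n - 1))^2 / 2"
proof -
  have "u n = Re (complex_of_real (u n))" by simp
  also have "\<dots> = real n * Re (lam^n) + 1 - real n"
    unfolding assms(2) by (simp flip: complex_cnj_power)
  also have "\<dots> = 1 - real n * (cmod (lam^n - 1))^2 / 2"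
  proof -
    have "(cmod (lam^n - 1))^2 = 2 - 2 * Re (lam^n)"
      using assms(1) by (intro normsq_minus1) (simp add: norm_power)
    then show ?thesis by (simp only:) (simp add: field_simps)
  qed
  finally show ?thesis .
qed

lemma sep:
  fixes lam :: complex and u :: "nat \<Rightarrow> real"
  assumes "cmod lam = 1" "\<not> (\<exists>k>0. lam ^ k = 1)"
    and uf: "\<And>n. u n = 1 - real n * (cmod (lam^n - 1))^2 / 2"
    and "q > 0"
  shows "\<exists>M. \<forall>i j. M \<le> i \<longrightarrow> i < j \<longrightarrow> j < i + q \<longrightarrow> \<not> (u i > 0 \<and> u j > 0)"
proof -
  define D where "D n = cmod (lam^n - 1)" for n
  define e where "e = Min (D ` {1..<q})"
  have Dpos: "D d > 0" if "d > 0" for d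
  proof -
    have "lam^d \<noteq> 1" using assms(2) that by blast
    then show ?thesis by (simp add: D_def)
  qed
  have epos: "e > 0" if "q > 1" unfolding e_def using that Dpos by (subst Min_gr_iff) auto
  have ele: "e \<le> D d" if "1 \<le> d" "d < q" for d unfolding e_def using that by (intro Min_le) auto
  show ?thesis
  proof (cases "q > 1")
    case False
    then show ?thesis by (intro exI[of _ 0]) auto
  next
    case True
    note ep = epos[OF True]
    obtain M :: nat where M: "real M > 8 / e^2" using reals_Archimedean2 by blast
    have Mpos: "real M > 0" using M ep by (smt (verit) divide_pos_pos zero_less_power)
    have small: "D m < e / 2" if "M \<le> m" "u m > 0" for m
    proof -
      have "real m * (D m)^2 < 2" using that(2) uf[of m] by (simp add: D_def)
      have mM: "real M \<le> real m" using that by simp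
      have "(D m)^2 * real M \<le> (D m)^2 * real m" using mM by (intro mult_left_mono) auto
      also have "\<dots> < 2" using \<open>real m * (D m)^2 < 2\<close> by (simp add: mult.commute)
      finally have "(D m)^2 < 2 / real M" using Mpos by (simp add: field_simps)
      also have "2 / real M < e^2 / 4" using M ep Mpos by (simp add: field_simps)
      finally have "(D m)^2 < (e/2)^2" by (simp add: power_divide)
      then show ?thesis using power_less_imp_less_base[of "D m" 2 "e/2"] ep by simp
    qed
    show ?thesis
    proof (intro exI[of _ M] allI impI notI)
      fix i j assume h: "M \<le> i" "i < j" "j < i + q" "0 < u i \<and> 0 < u j"
      define d where "d = j - i"
      have j: "j = i + d" and d: "1 \<le> d" "d < q" using h by (auto simp: d_def)
      have "lam^j - lam^i = lam^i * (lam^d - 1)" by (simp add: j power_add algebra_simps)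
      then have "D d = cmod (lam^j - lam^i)" using assms(1) by (simp add: D_def norm_mult norm_power)
      also have "\<dots> = cmod ((lam^j - 1) - (lam^i - 1))" by simp
      also have "\<dots> \<le> D j + D i" unfolding D_def by (rule norm_triangle_ineq4)
      also have "\<dots> < e" using small[of i] small[of j] h by auto
      finally show False using ele[OF d] by simp
    qed
  qed
qed

lemma infpos:
  fixes lam :: complex and u :: "nat \<Rightarrow> real"
  assumes "cmod lam = 1" "\<not> (\<exists>k>0. lam ^ k = 1)"
    and uf: "\<And>n. u n = 1 - real n * (cmod (lam^n - 1))^2 / 2"
  shows "\<exists>i\<ge>p. u i > 0"
proof -
  define D where "D n = cmod (lam^n - 1)" for n
  define a where "a = Arg lam"
  have lam0: "lam \<noteq> 0" using assms(1) by auto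
  have lamc: "lam = cis a" unfolding a_def using cis_Arg[OF lam0] assms(1) by (simp add: sgn_div_norm)
  have Dsq: "(D n)^2 = 2 - 2 * cos (real n * a)" for n
  proof -
    have "(D n)^2 = 2 - 2 * Re (lam^n)" unfolding D_def
      using assms(1) by (intro normsq_minus1) (simp add: norm_power)
    then show ?thesis by (simp add: lamc cos_n_Re_cis_pow_n)
  qed
  define e where "e = Min (D ` {1..Suc p})"
  have Dpos: "D d > 0" if "d > 0" for d
  proof -
    have "lam^d \<noteq> 1" using assms(2) that by blast
    then show ?thesis by (simp add: D_def)
  qed
  have ep: "e > 0" unfolding e_def using Dpos by (subst Min_gr_iff) auto
  have ele: "e \<le> D d" if "1 \<le> d" "d \<le> Suc p" for d unfolding e_def using that by (intro Min_le) auto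
  obtain N :: nat where N: "real N > 2 * pi / e + 32" using reals_Archimedean2 by blast
  have Npos: "real N > 32" using N ep pi_gt_zero by (smt (verit) divide_pos_pos)
  have Ne: "2 * pi / real N < e" using N ep Npos pi_gt_zero by (simp add: field_simps)
  have "N > 0" using Npos by simp
  from Dirichlet_approx[OF this, of "a / (2*pi)"]
  obtain h k where hk: "0 < k" "k \<le> int N" "\<bar>of_int k * (a / (2*pi)) - of_int h\<bar> < 1 / real N"
    by blast
  define m where "m = nat k"
  define x where "x = real m * a - 2 * pi * of_int h"
  have mk: "real m = of_int k" using hk by (simp add: m_def)
  have x_eq: "x = 2 * pi * (of_int k * (a / (2*pi)) - of_int h)" unfolding x_def mk
    by (simp add: field_simps)
  have xb: "\<bar>x\<bar> < 2 * pi / real N"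
  proof -
    have "\<bar>x\<bar> = 2 * pi * \<bar>of_int k * (a / (2*pi)) - of_int h\<bar>" unfolding x_eq
      using pi_gt_zero by (simp add: abs_mult)
    also have "\<dots> < 2 * pi * (1 / real N)" using hk(3) pi_gt_zero by (intro mult_strict_left_mono) auto
    finally show ?thesis by simp
  qed
  have "cos (real m * a) = cos (x + 2 * pi * of_int h)" by (simp add: x_def)
  also have "\<dots> = cos x" by (simp add: cos_add)
  finally have cx: "cos (real m * a) = cos x" .
  have "(D m)^2 = 4 * (sin (x/2))^2" using Dsq[of m] cx cos_double_sin[of "x/2"] by simp
  also have "\<dots> \<le> 4 * (x/2)^2"
    using abs_sin_x_le_abs_x[of "x/2"] abs_le_square_iff[of "sin (x/2)" "x/2"] by simp
  also have "\<dots> = x^2" by (simp add: power_divide)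
  finally have Dx: "(D m)^2 \<le> x^2" .
  have x2: "x^2 < (2 * pi / real N)^2" using power_strict_mono[of "\<bar>x\<bar>" "2 * pi / real N" 2] xb by simp
  hence Dlt: "D m < 2 * pi / real N"
    using Dx power_less_imp_less_base[of "D m" 2 "2 * pi / real N"] pi_gt_zero by simp
  have m1: "m \<ge> 1" using hk by (simp add: m_def)
  have mp: "m > Suc p"
  proof (rule ccontr)
    assume "\<not> m > Suc p"
    then have "e \<le> D m" using ele m1 by simp
    then show False using Dlt Ne by simp
  qed
  have mN: "real m \<le> real N" using hk mk by simp
  have "real m * (D m)^2 \<le> real N * (2 * pi / real N)^2"
    using mN Dx x2 by (intro mult_mono) auto
  also have "\<dots> = 4 * pi^2 / real N" using Npos by (simp add: power2_eq_square field_simps)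
  also have "\<dots> < 2"
  proof -
    have "pi * pi < 4 * 4" using pi_less_4 pi_gt_zero by (intro mult_strict_mono) auto
    then have "pi^2 < 16" by (simp add: power2_eq_square)
    then show ?thesis using Npos by (simp add: field_simps)
  qed
  finally have "u m > 0" using uf[of m] by (simp add: D_def)
  then show ?thesis using mp by (intro exI[of _ m]) auto
qed

theorem mainTheorem11:
  fixes lam :: complex and u :: "nat \<Rightarrow> real"
  assumes "algebraic lam"
    and "cmod lam = 1"
    and "\<not> (\<exists>k>0. lam ^ k = 1)"
    and "\<And>n. complex_of_real (u n) =
           of_nat n / 2 * lam ^ n + of_nat n / 2 * cnj lam ^ n + (1 - of_nat n)"
  shows "(\<forall>p::nat. \<exists>n::nat. \<forall>k<p. u (n + k) \<le> 0)
         \<and> \<not> almost_periodic (sign_description u)"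
proof -
  have uf: "\<And>n. u n = 1 - real n * (cmod (lam^n - 1))^2 / 2"
    using u_formula[OF assms(2) assms(4)] by blast
  have P1: "\<exists>n::nat. \<forall>k<p. u (n + k) \<le> 0" for p
  proof (cases "p = 0")
    case True then show ?thesis by simp
  next
    case False
    then obtain M where M: "\<forall>i j. M \<le> i \<longrightarrow> i < j \<longrightarrow> j < i + 2*p \<longrightarrow> \<not> (u i > 0 \<and> u j > 0)"
      using sep[OF assms(2) assms(3) uf, of "2*p"] by auto
    show ?thesis
    proof (cases "\<exists>i. M \<le> i \<and> i < M + p \<and> u i > 0")
      case True
      then obtain i where i: "M \<le> i" "i < M + p" "u i > 0" by blast
      show ?thesis
      proof (intro exI[of _ "M + p"] allI impI)
        fix k assume "k < p"
        then show "u (M + p + k) \<le> 0" using M[rule_format, of i "M + p + k"] i by linarith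
      qed
    next
      case False
      show ?thesis
      proof (intro exI[of _ M] allI impI)
        fix k assume "k < p"
        then have "M \<le> M + k" "M + k < M + p" by auto
        then show "u (M + k) \<le> 0" using False by (meson not_less)
      qed
    qed
  qed
  have occ: "occurs_at (sign_description u) [1] i \<longleftrightarrow> u i > 0" for i
    by (simp add: occurs_at_def sign_description_def sgn_real_def)
  have "\<not> almost_periodic (sign_description u)"
  proof
    assume "almost_periodic (sign_description u)"
    then obtain P where P: "(\<forall>i\<ge>P. \<not> occurs_at (sign_description u) [1] i) \<or>
        (\<forall>n. \<exists>i. n \<le> i \<and> i + length [1::real] \<le> n + P + 1 \<and> occurs_at (sign_description u) [1] i)"
      unfolding almost_periodic_def by blast
    show False
    proof (cases "\<forall>i\<ge>P. \<not> occurs_at (sign_description u) [1] i")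
      case True
      then show False using infpos[OF assms(2) assms(3) uf, of P] occ by blast
    next
      case False
      with P have h: "\<forall>n. \<exists>i\<ge>n. i \<le> n + P \<and> u i > 0" using occ by auto
      obtain n where n: "\<forall>k<P+1. u (n + k) \<le> 0" using P1 by blast
      obtain i where i: "n \<le> i" "i \<le> n + P" "u i > 0" using h by blast
      have "i - n < P + 1" using i by linarith
      then have "u (n + (i - n)) \<le> 0" using n by blast
      then show False using i by simp
    qed
  qed
  then show ?thesis using P1 by blast
qed

end
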